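(* Let $n\ge 1$, let $c\in\mathbb{R}^n$ with $c_1\ge c_2\ge\cdots\ge c_n\ge 0$, and let $u\in\mathbb{R}^n$ with $u_i>0$ for all $i$. Let $f(x)=\frac12\left(\sum_{i=1}^n x_i\right)^2-\sum_{i=1}^n c_ix_i$. For $k=0,\dots,n$ let $U_k=\sum_{i=1}^k u_i$ ($U_0=0$) and let $x^{(k)}$ be the vector with $x^{(k)}_i=u_i$ for $i\le k$ and $x^{(k)}_i=0$ for $i>k$. For $k=1,\dots,n$ let $G_k=U_{k-1}+\frac12u_k-c_k$, and suppose $\bar n$ is the smallest index in $\{1,\dots,n\}$ with $G_{\bar n}\ge 0$ and that $\bar n>1$. Let $\delta_1=\min\{c_{\bar n-1}-U_{\bar n-2},\,u_{\bar n-1}\}$, $\delta_2=\max\{c_{\bar n}-U_{\bar n-1},\,0\}$, $\bar x=x^{(\bar n-2)}+\delta_1e_{\bar n-1}$ and $\tilde x=x^{(\bar n-1)}+\delta_2e_{\bar n}$, where $e_i$ is the $i$-th standard unit vector. Then: (i) if $\delta_1=u_{\bar n-1}$, then $\min\{f(\bar x),f(\tilde x)\}=f(\tilde x)$; (ii) if $\delta_2=0$, then $\min\{f(\bar x),f(\tilde x)\}=f(\bar x)$. *)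

theory Defs
  imports Complex_Main
begin

text \<open>Vectors in R^n are represented as functions nat => real, indexed by 1..n
  (values outside 1..n are irrelevant / zero for the constructed vectors).\<close>

definition fobj :: "nat \<Rightarrow> (nat \<Rightarrow> real) \<Rightarrow> (nat \<Rightarrow> real) \<Rightarrow> real" where
  "fobj n c x = (1/2) * (\<Sum>i=1..n. x i)^2 - (\<Sum>i=1..n. c i * x i)"

definition Usum :: "(nat \<Rightarrow> real) \<Rightarrow> nat \<Rightarrow> real" where
  "Usum u k = (\<Sum>i=1..k. u i)"

definition xvec :: "(nat \<Rightarrow> real) \<Rightarrow> nat \<Rightarrow> nat \<Rightarrow> real" where
  "xvec u k = (\<lambda>i. if 1 \<le> i \<and> i \<le> k then u i else 0)"

definition unitv :: "nat \<Rightarrow> nat \<Rightarrow> real" where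
  "unitv j = (\<lambda>i. if i = j then 1 else 0)"

definition Gval :: "(nat \<Rightarrow> real) \<Rightarrow> (nat \<Rightarrow> real) \<Rightarrow> nat \<Rightarrow> real" where
  "Gval c u k = Usum u (k - 1) + (1/2) * u k - c k"

end

theory Submission
  imports Defs
begin

lemma sum_xv:
  assumes "k < j" "j \<le> n" "1 \<le> j"
  shows "(\<Sum>i=1..n. xvec u k i + d * unitv j i) = Usum u k + d"
    and "(\<Sum>i=1..n. c i * (xvec u k i + d * unitv j i)) = (\<Sum>i=1..k. c i * u i) + c j * d"
proof -
  have s1: "(\<Sum>i=1..n. g i * xvec u k i) = (\<Sum>i=1..k. g i * u i)" for g :: "nat \<Rightarrow> real"
  proof -
    have "(\<Sum>i=1..n. g i * xvec u k i) = (\<Sum>i\<in>{1..n} \<inter> {i. i \<le> k}. g i * u i)"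
      by (subst sum.inter_restrict) (auto simp: xvec_def intro!: sum.cong)
    also have "{1..n} \<inter> {i. i \<le> k} = {1..k}" using assms by auto
    finally show ?thesis .
  qed
  have s2: "(\<Sum>i=1..n. g i * (d * unitv j i)) = g j * d" for g :: "nat \<Rightarrow> real"
    using assms by (simp add: unitv_def if_distrib cong: if_cong)
  show "(\<Sum>i=1..n. xvec u k i + d * unitv j i) = Usum u k + d"
    using s1[of "\<lambda>_. 1"] s2[of "\<lambda>_. 1"] by (simp add: sum.distrib Usum_def)
  show "(\<Sum>i=1..n. c i * (xvec u k i + d * unitv j i)) = (\<Sum>i=1..k. c i * u i) + c j * d"
    using s1[of c] s2[of c] by (simp add: sum.distrib distrib_left)
qed

theorem corollary3:
  fixes n nb :: nat and c u :: "nat \<Rightarrow> real"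
  assumes n_ge: "n \<ge> 1"
    and c_mono: "\<And>i j. 1 \<le> i \<Longrightarrow> i \<le> j \<Longrightarrow> j \<le> n \<Longrightarrow> c j \<le> c i"
    and c_nonneg: "c n \<ge> 0"
    and u_pos: "\<And>i. 1 \<le> i \<Longrightarrow> i \<le> n \<Longrightarrow> u i > 0"
    and nb_range: "1 \<le> nb" "nb \<le> n"
    and nb_G: "Gval c u nb \<ge> 0"
    and nb_least: "\<And>k. 1 \<le> k \<Longrightarrow> k < nb \<Longrightarrow> Gval c u k < 0"
    and nb_gt1: "nb > 1"
  defines "xbar \<equiv> (\<lambda>i. xvec u (nb - 2) i
            + min (c (nb - 1) - Usum u (nb - 2)) (u (nb - 1)) * unitv (nb - 1) i)"
    and "xtil \<equiv> (\<lambda>i. xvec u (nb - 1) i + max (c nb - Usum u (nb - 1)) 0 * unitv nb i)"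
  shows "(min (c (nb - 1) - Usum u (nb - 2)) (u (nb - 1)) = u (nb - 1) \<longrightarrow> min (fobj n c xbar) (fobj n c xtil) = fobj n c xtil)
       \<and> (max (c nb - Usum u (nb - 1)) 0 = 0 \<longrightarrow> min (fobj n c xbar) (fobj n c xtil) = fobj n c xbar)"
proof -
  define A where "A = Usum u (nb - 2)"
  define a where "a = u (nb - 1)"
  define L where "L = (\<Sum>i=1..nb-2. c i * u i)"
  define d1 where "d1 = min (c (nb - 1) - A) a"
  define d2 where "d2 = max (c nb - A - a) 0"
  have e: "nb - 1 = Suc (nb - 2)" using nb_gt1 by simp
  have U1: "Usum u (nb - 1) = A + a" unfolding A_def a_def Usum_def e by simp
  have L1: "(\<Sum>i=1..nb-1. c i * u i) = L + c (nb - 1) * a" unfolding L_def a_def e by simp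
  have fb: "fobj n c xbar = (1/2) * (A + d1)^2 - (L + c (nb - 1) * d1)"
    unfolding fobj_def xbar_def d1_def A_def L_def a_def
    using sum_xv[of "nb-2" "nb-1" n] nb_range nb_gt1 by simp
  have t1: "(\<Sum>i=1..n. xtil i) = A + a + d2"
    unfolding xtil_def d2_def using sum_xv(1)[where k="nb-1" and j=nb and n=n and u=u and d="max (c nb - Usum u (nb - 1)) 0"] nb_range nb_gt1 U1
    by (simp add: algebra_simps)
  have t2: "(\<Sum>i=1..n. c i * xtil i) = L + c (nb - 1) * a + c nb * d2"
    unfolding xtil_def d2_def using sum_xv(2)[where k="nb-1" and j=nb and n=n and u=u and d="max (c nb - Usum u (nb - 1)) 0" and c=c] nb_range nb_gt1 U1 L1
    by (simp add: algebra_simps)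
  have ft: "fobj n c xtil = (1/2) * (A + a + d2)^2 - (L + c (nb - 1) * a + c nb * d2)"
    unfolding fobj_def t1 t2 ..
  have i: "fobj n c xtil \<le> fobj n c xbar" if "d1 = a"
  proof (cases "d2 = 0")
    case True thus ?thesis using fb ft that by simp
  next
    case False
    hence cn: "c nb = A + a + d2" unfolding d2_def by auto
    have "fobj n c xbar - fobj n c xtil = d2^2 / 2"
      unfolding fb ft that cn by (simp add: power2_eq_square algebra_simps)
    thus ?thesis by (smt (verit) zero_le_power2 divide_nonneg_pos)
  qed
  have ii: "fobj n c xbar \<le> fobj n c xtil" if "d2 = 0"
  proof (cases "d1 = a")
    case True thus ?thesis using fb ft that by simp
  next
    case False
    hence cn: "c (nb - 1) = A + d1" unfolding d1_def by auto
    have "fobj n c xtil - fobj n c xbar = (a - d1)^2 / 2"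
      unfolding fb ft that cn by (simp add: power2_eq_square algebra_simps)
    thus ?thesis by (smt (verit) zero_le_power2 divide_nonneg_pos)
  qed
  have D1: "min (c (nb - 1) - Usum u (nb - 2)) (u (nb - 1)) = d1" unfolding d1_def A_def a_def ..
  have D2: "max (c nb - Usum u (nb - 1)) 0 = d2" unfolding d2_def U1 by (simp add: algebra_simps)
  show ?thesis using i ii D1 D2 a_def by (auto simp: min.absorb1 min.absorb2)
qed

end
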